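(* Suppose $(J,F,Y)$ is a splitting pullback triple with $J:\mathcal X\to\mathcal H$, $F:\mathcal X\to\mathcal E$. Then $J$ and $F$ are partial isometries and $$\mathcal N(F)=\mathcal R(J^* ),\quad \mathcal R(J)=\mathcal H,\qquad \mathcal N(J)=\mathcal R(F^* ),\quad \mathcal R(F)=\mathcal E.$$
   Context: For Hilbert spaces $\mathcal H,\mathcal X,\mathcal E$, a pullback triple $(J,F,Y)$ consists of $J:\mathcal X\to\mathcal H$, $F:\mathcal X\to\mathcal E$ bounded with dense range, $Y:\mathcal H\to\mathcal X$ a completion operator (densely defined injective linear map with dense range), with $\|u\|_{\mathcal X}^2=\|Ju\|^2+\|Fu\|_{\mathcal E}^2$ for all $u\in\mathcal X$ and $JYf=f$ for $f\in\mathcal D(Y)$. The triple is splitting if $F$ is a partial isometry (equivalently $\mathcal X=\mathcal N(J)\oplus\mathcal N(F)$, or $JF^*=0$, or $J\mathcal N(F)$ dense in $\mathcal H$). $\mathcal N,\mathcal R$ denote null space and range. *)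

theory Defs
  imports "HOL-Analysis.Analysis"
begin

text \<open>Hilbert spaces are modelled as (real) complete inner product spaces,
  i.e. types of class real_inner and complete_space.  Adjoints are the library's adjoint.\<close>

definition null_space :: "('a \<Rightarrow> 'b::zero) \<Rightarrow> 'a set" where
  "null_space T = {x. T x = 0}"

definition partial_isometry :: "('a::real_inner \<Rightarrow> 'b::real_inner) \<Rightarrow> bool" where
  "partial_isometry T \<longleftrightarrow> bounded_linear T \<and>
     (\<forall>x. (\<forall>z\<in>null_space T. x \<bullet> z = 0) \<longrightarrow> norm (T x) = norm x)"

definition completion_operator :: "'h::real_inner set \<Rightarrow> ('h \<Rightarrow> 'x::real_inner) \<Rightarrow> bool" where
  "completion_operator D Y \<longleftrightarrow> subspace D \<and> closure D = UNIV \<and>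
     (\<forall>f\<in>D. \<forall>g\<in>D. Y (f + g) = Y f + Y g) \<and>
     (\<forall>c. \<forall>f\<in>D. Y (c *\<^sub>R f) = c *\<^sub>R Y f) \<and>
     inj_on Y D \<and> closure (Y ` D) = UNIV"

definition pullback_triple ::
  "('x::{real_inner,complete_space} \<Rightarrow> 'h::{real_inner,complete_space})
   \<Rightarrow> ('x \<Rightarrow> 'e::{real_inner,complete_space}) \<Rightarrow> 'h set \<Rightarrow> ('h \<Rightarrow> 'x) \<Rightarrow> bool" where
  "pullback_triple J F D Y \<longleftrightarrow>
     bounded_linear J \<and> bounded_linear F \<and>
     closure (range J) = UNIV \<and> closure (range F) = UNIV \<and>
     completion_operator D Y \<and>
     (\<forall>u. (norm u)\<^sup>2 = (norm (J u))\<^sup>2 + (norm (F u))\<^sup>2) \<and>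
     (\<forall>f\<in>D. J (Y f) = f)"

definition splitting_pullback_triple ::
  "('x::{real_inner,complete_space} \<Rightarrow> 'h::{real_inner,complete_space})
   \<Rightarrow> ('x \<Rightarrow> 'e::{real_inner,complete_space}) \<Rightarrow> 'h set \<Rightarrow> ('h \<Rightarrow> 'x) \<Rightarrow> bool" where
  "splitting_pullback_triple J F D Y \<longleftrightarrow> pullback_triple J F D Y \<and> partial_isometry F"

end

theory Submission
  imports Defs
begin

lemma proj_exists:
  fixes S :: "'a::{real_inner,complete_space} set"
  assumes sub: "subspace S" and cl: "closed S"
  shows "\<exists>p\<in>S. \<forall>s\<in>S. (x - p) \<bullet> s = 0"
proof -
  define q where "q = Inf ((\<lambda>s. (norm (x - s))\<^sup>2) ` S)"
  have ne: "(\<lambda>s. (norm (x - s))\<^sup>2) ` S \<noteq> {}" using subspace_0[OF sub] by auto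
  have bdd: "bdd_below ((\<lambda>s. (norm (x - s))\<^sup>2) ` S)"
    by (rule bdd_belowI[where m=0]) auto
  have qle: "q \<le> (norm (x - s))\<^sup>2" if "s \<in> S" for s
    unfolding q_def using bdd that by (intro cInf_lower) auto
  have "\<exists>s\<in>S. (norm (x - s))\<^sup>2 < q + 1 / (real n + 1)" for n
  proof -
    have "Inf ((\<lambda>s. (norm (x - s))\<^sup>2) ` S) < q + 1 / (real n + 1)"
      unfolding q_def by (simp add: add_pos_pos)
    then show ?thesis using cInf_less_iff[OF ne bdd] by auto
  qed
  then obtain s where sS: "\<And>n. s n \<in> S" and sl: "\<And>n. (norm (x - s n))\<^sup>2 < q + 1 / (real n + 1)"
    by metis
  have est: "(norm (s n - s m))\<^sup>2 < 2 / (real n + 1) + 2 / (real m + 1)" for n m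
  proof -
    let ?a = "x - s n" and ?b = "x - s m"
    have par: "(norm (?a - ?b))\<^sup>2 + (norm (?a + ?b))\<^sup>2 = 2 * (norm ?a)\<^sup>2 + 2 * (norm ?b)\<^sup>2"
      by (simp add: power2_norm_eq_inner inner_diff inner_add inner_commute algebra_simps)
    have mid: "(1/2) *\<^sub>R (s n + s m) \<in> S"
      using sS sub by (simp add: subspace_add subspace_scale)
    have "?a + ?b = 2 *\<^sub>R (x - (1/2) *\<^sub>R (s n + s m))"
      by (simp add: algebra_simps scaleR_2)
    hence "(norm (?a + ?b))\<^sup>2 = 4 * (norm (x - (1/2) *\<^sub>R (s n + s m)))\<^sup>2"
      by (simp add: power_mult_distrib)
    moreover have "q \<le> (norm (x - (1/2) *\<^sub>R (s n + s m)))\<^sup>2" using qle mid by blast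
    moreover have "(norm (?a - ?b))\<^sup>2 = (norm (s n - s m))\<^sup>2"
      by (simp add: norm_minus_commute)
    moreover have "2 / (real n + 1) = 2 * (1 / (real n + 1))" "2 / (real m + 1) = 2 * (1 / (real m + 1))"
      by simp_all
    ultimately show ?thesis using par sl[of n] sl[of m] by linarith
  qed
  have "Cauchy s"
  proof (rule metric_CauchyI)
    fix e :: real assume e: "e > 0"
    obtain N :: nat where N: "4 / (e\<^sup>2) < real N + 1"
      using reals_Archimedean2[of "4 / e\<^sup>2"] by (metis add.commute add_strict_increasing zero_less_one less_eq_real_def)
    have N': "4 / (real N + 1) < e\<^sup>2"
      using N e by (simp add: field_simps)
    show "\<exists>M. \<forall>m\<ge>M. \<forall>n\<ge>M. dist (s m) (s n) < e"
    proof (intro exI allI impI)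
      fix m n assume mn: "N \<le> m" "N \<le> n"
      have "2 / (real m + 1) \<le> 2 / (real N + 1)" "2 / (real n + 1) \<le> 2 / (real N + 1)"
        using mn by (auto simp: divide_left_mono)
      hence "(norm (s m - s n))\<^sup>2 < e\<^sup>2" using est[of m n] N' by linarith
      hence "norm (s m - s n) < e" using e by (simp add: power_less_imp_less_base less_imp_le)
      thus "dist (s m) (s n) < e" by (simp add: dist_norm)
    qed
  qed
  then obtain p where sp: "s \<longlonglongrightarrow> p" using Cauchy_convergent_iff convergent_def by blast
  have pS: "p \<in> S" using closed_sequentially[OF cl _ sp] sS by blast
  have lim1: "(\<lambda>n. (norm (x - s n))\<^sup>2) \<longlonglongrightarrow> (norm (x - p))\<^sup>2"
    by (intro tendsto_intros sp)
  have lim2: "(\<lambda>n. q + 1 / (real n + 1)) \<longlonglongrightarrow> q + 0"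
    using LIMSEQ_inverse_real_of_nat by (intro tendsto_intros) (simp add: inverse_eq_divide add.commute)
  have "(norm (x - p))\<^sup>2 \<le> q + 0"
    by (rule LIMSEQ_le[OF lim1 lim2]) (use sl less_imp_le in blast)
  hence pmin: "(norm (x - p))\<^sup>2 \<le> (norm (x - t))\<^sup>2" if "t \<in> S" for t using qle[OF that] by linarith
  show ?thesis
  proof (intro bexI[OF _ pS] ballI)
    fix z assume zS: "z \<in> S"
    let ?w = "x - p"
    show "?w \<bullet> z = 0"
    proof (cases "z = 0")
      case True thus ?thesis by simp
    next
      case False
      define t where "t = (?w \<bullet> z) / (z \<bullet> z)"
      have zz: "z \<bullet> z > 0" using False by simp
      have "p + t *\<^sub>R z \<in> S" using sub pS zS by (simp add: subspace_add subspace_scale)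
      hence "(norm ?w)\<^sup>2 \<le> (norm (?w - t *\<^sub>R z))\<^sup>2" using pmin by (simp add: algebra_simps)
      hence "0 \<le> - 2 * t * (?w \<bullet> z) + t * t * (z \<bullet> z)"
        by (simp add: power2_norm_eq_inner inner_diff inner_commute algebra_simps)
      also have "\<dots> = - (?w \<bullet> z)\<^sup>2 / (z \<bullet> z)"
        using zz by (simp add: t_def field_simps power2_eq_square)
      finally have "(?w \<bullet> z)\<^sup>2 / (z \<bullet> z) \<le> 0" by simp
      hence "(?w \<bullet> z)\<^sup>2 \<le> 0" using zz
        by (simp add: divide_le_0_iff)
      thus ?thesis by simp
    qed
  qed
qed

lemma polar_iso:
  fixes T :: "'a::real_inner \<Rightarrow> 'b::real_inner"
  assumes lin: "linear T" and sub: "subspace S" and iso: "\<forall>x\<in>S. norm (T x) = norm x"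
    and x: "x \<in> S" and y: "y \<in> S"
  shows "T x \<bullet> T y = x \<bullet> y"
proof -
  have "x + y \<in> S" using sub x y by (simp add: subspace_add)
  hence "(norm (T (x + y)))\<^sup>2 = (norm (x + y))\<^sup>2" using iso by simp
  moreover have "(norm (T x))\<^sup>2 = (norm x)\<^sup>2" "(norm (T y))\<^sup>2 = (norm y)\<^sup>2" using iso x y by simp_all
  ultimately show ?thesis using linear_add[OF lin, of x y]
    by (simp add: power2_norm_eq_inner inner_add inner_commute algebra_simps)
qed

lemma closed_image_iso:
  fixes T :: "'a::{real_normed_vector,complete_space} \<Rightarrow> 'b::real_normed_vector"
  assumes bl: "bounded_linear T" and sub: "subspace S" and cl: "closed S"
    and iso: "\<forall>x\<in>S. norm (T x) = norm x"
  shows "closed (T ` S)"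
  unfolding closed_sequential_limits
proof (intro allI impI, elim conjE)
  fix y l assume yS: "\<forall>n. y n \<in> T ` S" and yl: "y \<longlonglongrightarrow> l"
  obtain x where xS: "\<And>n. x n \<in> S" and xy: "\<And>n. y n = T (x n)"
  proof -
    have "\<forall>n. \<exists>u. u \<in> S \<and> y n = T u" using yS by blast
    then obtain x where "\<forall>n. x n \<in> S \<and> y n = T (x n)" by metis
    thus ?thesis using that by blast
  qed
  have cy: "Cauchy y" using yl by (rule LIMSEQ_imp_Cauchy)
  have d: "dist (x m) (x n) = dist (y m) (y n)" for m n
  proof -
    have "x m - x n \<in> S" using sub xS by (simp add: subspace_diff)
    hence "norm (T (x m - x n)) = norm (x m - x n)" using iso by blast
    thus ?thesis using xy by (simp add: dist_norm linear_diff[OF bounded_linear.linear[OF bl]])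
  qed
  have "Cauchy x" using cy unfolding Cauchy_def d .
  then obtain p where xp: "x \<longlonglongrightarrow> p" using Cauchy_convergent_iff convergent_def by blast
  have pS: "p \<in> S" using closed_sequentially[OF cl _ xp] xS by blast
  have "(\<lambda>n. T (x n)) \<longlonglongrightarrow> T p" using bounded_linear.tendsto[OF bl xp] .
  moreover have "y = (\<lambda>n. T (x n))" using xy by (rule ext)
  ultimately have "y \<longlonglongrightarrow> T p" by simp
  hence "l = T p" using yl LIMSEQ_unique by blast
  thus "l \<in> T ` S" using pS by blast
qed

lemma adj_range:
  fixes T :: "'a::real_inner \<Rightarrow> 'b::real_inner"
  assumes lin: "linear T" and sub: "subspace S"
    and dec: "\<forall>x. \<exists>a\<in>S. \<forall>z\<in>S. (x - a) \<bullet> z = 0"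
    and van: "\<forall>x. (\<forall>z\<in>S. x \<bullet> z = 0) \<longrightarrow> T x = 0"
    and iso: "\<forall>x\<in>S. norm (T x) = norm x" and sur: "T ` S = UNIV"
  shows "range (adjoint T) = S"
proof -
  define G where "G e = (SOME m. m \<in> S \<and> T m = e)" for e
  have GS: "G e \<in> S \<and> T (G e) = e" for e
  proof -
    have "\<exists>m. m \<in> S \<and> T m = e" using sur by (metis UNIV_I imageE)
    thus ?thesis unfolding G_def by (rule someI_ex)
  qed
  have injS: "m = m'" if "m \<in> S" "m' \<in> S" "T m = T m'" for m m'
  proof -
    have "m - m' \<in> S" using sub that by (simp add: subspace_diff)
    hence "norm (T (m - m')) = norm (m - m')" using iso by blast
    thus ?thesis using that linear_diff[OF lin] by simp
  qed
  have "adjoint T = G"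
  proof (rule adjoint_unique, intro allI)
    fix x e
    obtain a where aS: "a \<in> S" and ao: "\<forall>z\<in>S. (x - a) \<bullet> z = 0" using dec by blast
    have "T (x - a) = 0" using van ao by blast
    hence Tx: "T x = T a" using linear_diff[OF lin] by simp
    have "T a \<bullet> T (G e) = a \<bullet> G e" using polar_iso[OF lin sub iso aS] GS by blast
    moreover have "(x - a) \<bullet> G e = 0" using ao GS by blast
    ultimately show "T x \<bullet> e = x \<bullet> G e" using Tx GS[of e]
      by (simp add: inner_diff_left)
  qed
  moreover have "range G = S"
  proof
    show "range G \<subseteq> S" using GS by blast
    show "S \<subseteq> range G"
    proof
      fix m assume m: "m \<in> S"
      have "G (T m) = m" using injS[OF _ m] GS by blast
      thus "m \<in> range G" by (metis rangeI)
    qed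
  qed
  ultimately show ?thesis by simp
qed

theorem mainTheorem7:
  fixes J :: "'x::{real_inner,complete_space} \<Rightarrow> 'h::{real_inner,complete_space}"
    and F :: "'x \<Rightarrow> 'e::{real_inner,complete_space}"
    and D :: "'h set" and Y :: "'h \<Rightarrow> 'x"
  assumes "splitting_pullback_triple J F D Y"
  shows "partial_isometry J \<and> partial_isometry F \<and>
         null_space F = range (adjoint J) \<and> range J = UNIV \<and>
         null_space J = range (adjoint F) \<and> range F = UNIV"
proof -
  have blJ: "bounded_linear J" and blF: "bounded_linear F"
    and dJ: "closure (range J) = UNIV" and dF: "closure (range F) = UNIV"
    and nrm: "\<And>u. (norm u)\<^sup>2 = (norm (J u))\<^sup>2 + (norm (F u))\<^sup>2"
    and piF: "partial_isometry F"
    using assms unfolding splitting_pullback_triple_def pullback_triple_def by auto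
  have linJ: "linear J" and linF: "linear F"
    using blJ blF bounded_linear.linear by auto
  define NF where "NF = null_space F"
  define M where "M = {x. \<forall>z\<in>NF. x \<bullet> z = 0}"
  have subNF: "subspace NF"
    unfolding NF_def null_space_def subspace_def
    using linear_add[OF linF] linear_scale[OF linF] linear_0[OF linF] by auto
  have clNF: "closed NF"
    unfolding NF_def null_space_def
    by (intro closed_Collect_eq linear_continuous_on blF continuous_on_const)
  have dec: "\<forall>x. \<exists>a\<in>NF. \<forall>z\<in>NF. (x - a) \<bullet> z = 0"
    using proj_exists[OF subNF clNF] by blast
  have A: "\<forall>b. (\<forall>z\<in>NF. b \<bullet> z = 0) \<longrightarrow> J b = 0"
  proof (intro allI impI)
    fix b assume "\<forall>z\<in>NF. b \<bullet> z = 0"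
    hence "norm (F b) = norm b" using piF unfolding partial_isometry_def NF_def by blast
    hence "(norm (J b))\<^sup>2 = 0" using nrm[of b] by simp
    thus "J b = 0" by simp
  qed
  have B: "\<forall>u\<in>NF. norm (J u) = norm u"
  proof
    fix u assume "u \<in> NF"
    hence "F u = 0" unfolding NF_def null_space_def by simp
    hence "(norm u)\<^sup>2 = (norm (J u))\<^sup>2" using nrm[of u] by simp
    thus "norm (J u) = norm u" by (simp add: power2_eq_iff_nonneg)
  qed
  have subM: "subspace M"
    unfolding M_def subspace_def by (auto simp: inner_add_left)
  have clM: "closed M"
  proof -
    have "M = (\<Inter>z\<in>NF. {x. x \<bullet> z = 0})" unfolding M_def by auto
    moreover have "closed {x. x \<bullet> z = 0}" for z :: 'x
      by (intro closed_Collect_eq continuous_intros)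
    ultimately show ?thesis by auto
  qed
  have isoF: "\<forall>x\<in>M. norm (F x) = norm x"
    using piF unfolding partial_isometry_def M_def NF_def by blast
  have Mdec: "x - a \<in> M" if "\<forall>z\<in>NF. (x - a) \<bullet> z = 0" for x a
    using that unfolding M_def by blast
  have vanF: "\<forall>x. (\<forall>z\<in>M. x \<bullet> z = 0) \<longrightarrow> F x = 0"
  proof (intro allI impI)
    fix x assume xo: "\<forall>z\<in>M. x \<bullet> z = 0"
    obtain a where aN: "a \<in> NF" and ao: "\<forall>z\<in>NF. (x - a) \<bullet> z = 0" using dec by blast
    have bM: "x - a \<in> M" using Mdec[OF ao] .
    have "x \<bullet> (x - a) = 0" using xo bM by blast
    moreover have "a \<bullet> (x - a) = 0" using ao aN by (simp add: inner_commute)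
    ultimately have "(x - a) \<bullet> (x - a) = 0" by (simp add: inner_diff_left)
    hence "x = a" by simp
    thus "F x = 0" using aN unfolding NF_def null_space_def by simp
  qed
  have decM: "\<forall>x. \<exists>c\<in>M. \<forall>z\<in>M. (x - c) \<bullet> z = 0"
  proof
    fix x
    obtain a where aN: "a \<in> NF" and ao: "\<forall>z\<in>NF. (x - a) \<bullet> z = 0" using dec by blast
    have "x - a \<in> M" using Mdec[OF ao] .
    moreover have "\<forall>z\<in>M. (x - (x - a)) \<bullet> z = 0"
      using aN unfolding M_def by (simp add: inner_commute)
    ultimately show "\<exists>c\<in>M. \<forall>z\<in>M. (x - c) \<bullet> z = 0" by blast
  qed
  have NJ: "null_space J = M"
  proof
    show "M \<subseteq> null_space J" using A unfolding M_def null_space_def by blast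
    show "null_space J \<subseteq> M"
    proof
      fix u assume u: "u \<in> null_space J"
      obtain a where aN: "a \<in> NF" and ao: "\<forall>z\<in>NF. (u - a) \<bullet> z = 0" using dec by blast
      have "J (u - a) = 0" using A ao by blast
      hence "J a = 0" using u linear_diff[OF linJ] unfolding null_space_def by simp
      hence "a = 0" using B aN by force
      thus "u \<in> M" using Mdec[OF ao] by simp
    qed
  qed
  have piJ: "partial_isometry J"
    unfolding partial_isometry_def
  proof (intro conjI blJ allI impI)
    fix x assume "\<forall>z\<in>null_space J. x \<bullet> z = 0"
    hence "F x = 0" using vanF NJ by blast
    hence "x \<in> NF" unfolding NF_def null_space_def by simp
    thus "norm (J x) = norm x" using B by blast
  qed
  have rJ: "range J = J ` NF"
  proof
    show "J ` NF \<subseteq> range J" by blast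
    show "range J \<subseteq> J ` NF"
    proof
      fix y assume "y \<in> range J"
      then obtain x where y: "y = J x" by blast
      obtain a where aN: "a \<in> NF" and ao: "\<forall>z\<in>NF. (x - a) \<bullet> z = 0" using dec by blast
      have "J (x - a) = 0" using A ao by blast
      hence "J x = J a" using linear_diff[OF linJ] by simp
      thus "y \<in> J ` NF" using y aN by blast
    qed
  qed
  have rJU: "J ` NF = UNIV"
    using closed_image_iso[OF blJ subNF clNF B] dJ rJ closure_closed by metis
  have rF: "range F = F ` M"
  proof
    show "F ` M \<subseteq> range F" by blast
    show "range F \<subseteq> F ` M"
    proof
      fix y assume "y \<in> range F"
      then obtain x where y: "y = F x" by blast
      obtain a where aN: "a \<in> NF" and ao: "\<forall>z\<in>NF. (x - a) \<bullet> z = 0" using dec by blast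
      have "F a = 0" using aN unfolding NF_def null_space_def by simp
      hence "F x = F (x - a)" using linear_diff[OF linF] by simp
      thus "y \<in> F ` M" using y Mdec[OF ao] by blast
    qed
  qed
  have rFU: "F ` M = UNIV"
    using closed_image_iso[OF blF subM clM isoF] dF rF closure_closed by metis
  have adjJ: "range (adjoint J) = NF"
    using adj_range[OF linJ subNF dec A B rJU] .
  have adjF: "range (adjoint F) = M"
    using adj_range[OF linF subM decM vanF isoF rFU] .
  show ?thesis
    using piJ piF adjJ adjF NJ rJ rJU rF rFU unfolding NF_def by simp
qed

end
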